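(* Let $\ell^\infty\neq0$ be real. For $k\in\{1,2\}$ let $\Sigma^{(k)}$ be disjoint finite site sets, each consisting of real sites, complex sites and their conjugates, with multiplicities $m_\alpha\ge1$, levels $\ell^\alpha_{[p]}$ ($0\le p\le m_\alpha-1$, $\ell^\alpha_{[m_\alpha-1]}\ne0$) real for real sites and with $m_{\bar\alpha}=m_\alpha$, $\ell^{\bar\alpha}_{[p]}=\overline{\ell^\alpha_{[p]}}$ for conjugate sites, and pairwise distinct positions $z_\alpha$ real for real sites and $z_{\bar\alpha}=\overline{z_\alpha}$. Let $\chi_k(z)=\sum_{\alpha\in\Sigma^{(k)}}\sum_p\frac{\ell^\alpha_{[p]}}{(z-z_\alpha)^{p+1}}$, $\varphi_k=\chi_k-\ell^\infty$, $M_k=\sum_{\alpha\in\Sigma^{(k)}}m_\alpha$, $M=M_1+M_2$, with simple zeros $\zeta^{(1)}_i$ ($i\le M_1$) of $\varphi_1$ and $\zeta^{(2)}_i$ ($M_1<i\le M$) of $\varphi_2$. For real $\gamma\neq0$ let $\varphi_{1\otimes2,\gamma}(z)=\chi_1(z)+\chi_2(z-\gamma^{-1})-\ell^\infty$, with zeros $\zeta_i(\gamma)$ labelled for small $\gamma$ so that $\zeta_i(\gamma)=\zeta^{(1)}_i+O(\gamma)$ ($i\le M_1$) and $\zeta_i(\gamma)=\gamma^{-1}+\zeta^{(2)}_i+O(\gamma)$ ($i>M_1$). Fix $i\in\{1,\dots,M\}$, let $k=1$ if $i\le M_1$ and $k=2$ otherwise, and suppose $\zeta^{(k)}_i$ is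 real. Then for $\gamma$ small enough, $\zeta_i(\gamma)$ is real, and $\varphi_{1\otimes2,\gamma}'(\zeta_i(\gamma))$ and $\varphi_k'(\zeta^{(k)}_i)$ have the same sign. *)

theory Defs
  imports "HOL-Analysis.Analysis" "HOL-Library.Landau_Symbols"
begin

text \<open>A site configuration: finite site set S, a conjugation map cj on sites
(cj a = a for real sites), positions pos, multiplicities m and levels lev a p.\<close>
definition site_config ::
  "'s set \<Rightarrow> ('s \<Rightarrow> 's) \<Rightarrow> ('s \<Rightarrow> complex) \<Rightarrow> ('s \<Rightarrow> nat) \<Rightarrow> ('s \<Rightarrow> nat \<Rightarrow> complex) \<Rightarrow> bool"
where
  "site_config S cj pos m lev \<longleftrightarrow>
     finite S \<and>
     (\<forall>a\<in>S. cj a \<in> S \<and> cj (cj a) = a) \<and>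
     (\<forall>a\<in>S. m a \<ge> 1 \<and> lev a (m a - 1) \<noteq> 0) \<and>
     (\<forall>a\<in>S. cj a = a \<longrightarrow> pos a \<in> \<real> \<and> (\<forall>p<m a. lev a p \<in> \<real>)) \<and>
     (\<forall>a\<in>S. m (cj a) = m a \<and> pos (cj a) = cnj (pos a) \<and>
              (\<forall>p<m a. lev (cj a) p = cnj (lev a p))) \<and>
     inj_on pos S"

definition chi ::
  "'s set \<Rightarrow> ('s \<Rightarrow> complex) \<Rightarrow> ('s \<Rightarrow> nat) \<Rightarrow> ('s \<Rightarrow> nat \<Rightarrow> complex) \<Rightarrow> complex \<Rightarrow> complex"
where
  "chi S pos m lev z = (\<Sum>a\<in>S. \<Sum>p<m a. lev a p / (z - pos a) ^ (p + 1))"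

end

theory Submission
  imports Defs
begin

definition chid :: "'s set \<Rightarrow> ('s \<Rightarrow> complex) \<Rightarrow> ('s \<Rightarrow> nat) \<Rightarrow> ('s \<Rightarrow> nat \<Rightarrow> complex) \<Rightarrow> complex \<Rightarrow> complex"
  where "chid S pos m lev z = (\<Sum>a\<in>S. \<Sum>p<m a. - (of_nat (p+1) * lev a p) / (z - pos a) ^ (p + 2))"

lemma term_deriv:
  assumes "z \<noteq> b"
  shows "((\<lambda>z. c / (z - b) ^ (p + 1)) has_field_derivative
           - (of_nat (p+1) * c) / (z - b) ^ (p + 2)) (at z)"
proof -
  have nz: "z - b \<noteq> 0" using assms by simp
  have e: "(z - b) ^ (p + 1) * (z - b) ^ (p + 1) = (z - b) ^ (p + 2) * (z - b) ^ p"
    by (simp add: power_add[symmetric])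
  have e2: "(z - b) ^ (p + 1 - Suc 0) = (z - b) ^ p" by simp
  show ?thesis
    apply (rule derivative_eq_intros refl | simp add: nz)+
    unfolding e e2
  proof -
    have "(z - b) ^ p \<noteq> 0" using nz by simp
    then show "(0 * (z - b) ^ (p + 1) - c * (of_nat (p + 1) * ((1 - 0) * (z - b) ^ p))) /
     ((z - b) ^ (p + 2) * (z - b) ^ p) = - (of_nat (p + 1) * c) / (z - b) ^ (p + 2)"
      by (simp add: mult.assoc[symmetric])
  qed (use nz in auto)
qed

lemma chi_deriv:
  assumes "finite S" "z \<notin> pos ` S"
  shows "(chi S pos m lev has_field_derivative chid S pos m lev z) (at z)"
proof -
  have "((\<lambda>z. \<Sum>a\<in>S. \<Sum>p<m a. lev a p / (z - pos a) ^ (p + 1)) has_field_derivative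
     (\<Sum>a\<in>S. \<Sum>p<m a. - (of_nat (p+1) * lev a p) / (z - pos a) ^ (p + 2))) (at z)"
    apply (intro DERIV_sum term_deriv)
    using assms by auto
  then show ?thesis unfolding chi_def[abs_def] chid_def .
qed

lemma chid_cont:
  assumes "z \<notin> pos ` S"
  shows "isCont (chid S pos m lev) z"
  unfolding chid_def[abs_def]
  apply (intro continuous_intros)
  using assms by auto

lemma term_decay:
  "((\<lambda>w. - (of_nat (p+1) * c) / (w - b) ^ (p + 2)) \<longlongrightarrow> (0::complex)) at_infinity"
proof -
  have f0: "filterlim (\<lambda>w::complex. w - b) at_infinity at_infinity"
    by (rule tendsto_add_filterlim_at_infinity'[where g="\<lambda>_. -b", OF filterlim_ident tendsto_const, simplified])
  have f: "filterlim (\<lambda>w::complex. (w - b) ^ (p+2)) at_infinity at_infinity"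
    using filterlim_compose[OF filterlim_power_at_infinity[of "p+2"] f0] by simp
  have "((\<lambda>w. (- (of_nat (p+1) * c)) * inverse ((w - b) ^ (p + 2))) \<longlongrightarrow> (- (of_nat (p+1) * c)) * 0) at_infinity"
    by (intro tendsto_mult tendsto_const filterlim_compose[OF tendsto_inverse_0 f])
  then show ?thesis by (simp add: divide_inverse)
qed

lemma chid_decay: "(chid S pos m lev \<longlongrightarrow> 0) at_infinity"
proof -
  have "((\<lambda>w. \<Sum>a\<in>S. \<Sum>p<m a. - (of_nat (p+1) * lev a p) / (w - pos a) ^ (p + 2)) \<longlongrightarrow> (\<Sum>a\<in>S. \<Sum>p<m a. (0::complex))) at_infinity"
    by (intro tendsto_sum term_decay)
  then show ?thesis unfolding chid_def[abs_def] by simp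
qed

lemma cj_bij:
  assumes "site_config S cj pos m lev"
  shows "bij_betw cj S S"
  using assms unfolding site_config_def
  by (intro bij_betw_byWitness[where f'=cj]) auto

lemma chi_cnj:
  assumes "site_config S cj pos m lev"
  shows "chi S pos m lev (cnj z) = cnj (chi S pos m lev z)"
proof -
  have "chi S pos m lev (cnj z) = (\<Sum>a\<in>S. \<Sum>p<m (cj a). lev (cj a) p / (cnj z - pos (cj a)) ^ (p + 1))"
    unfolding chi_def using sum.reindex_bij_betw[OF cj_bij[OF assms], symmetric] by simp
  also have "\<dots> = (\<Sum>a\<in>S. \<Sum>p<m a. cnj (lev a p / (z - pos a) ^ (p + 1)))"
    using assms unfolding site_config_def
    by (intro sum.cong refl) auto
  also have "\<dots> = cnj (chi S pos m lev z)" unfolding chi_def by (simp add: cnj_sum)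
  finally show ?thesis .
qed

lemma chid_cnj:
  assumes "site_config S cj pos m lev"
  shows "chid S pos m lev (cnj z) = cnj (chid S pos m lev z)"
proof -
  have "chid S pos m lev (cnj z) = (\<Sum>a\<in>S. \<Sum>p<m (cj a). - (of_nat (p+1) * lev (cj a) p) / (cnj z - pos (cj a)) ^ (p + 2))"
    unfolding chid_def using sum.reindex_bij_betw[OF cj_bij[OF assms], symmetric] by simp
  also have "\<dots> = (\<Sum>a\<in>S. \<Sum>p<m a. cnj (- (of_nat (p+1) * lev a p) / (z - pos a) ^ (p + 2)))"
    using assms unfolding site_config_def
    by (intro sum.cong refl) auto
  also have "\<dots> = cnj (chid S pos m lev z)" unfolding chid_def by (simp add: cnj_sum)
  finally show ?thesis .
qed


lemma shift_deriv:
  assumes "finite S1" "finite S2" "z \<notin> pos1 ` S1" "z - a \<notin> pos2 ` S2"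
  shows "((\<lambda>z. chi S1 pos1 m1 lev1 z + chi S2 pos2 m2 lev2 (z - a) - L) has_field_derivative
           chid S1 pos1 m1 lev1 z + chid S2 pos2 m2 lev2 (z - a)) (at z)"
proof -
  have d2: "((\<lambda>z. chi S2 pos2 m2 lev2 (z - a)) has_field_derivative chid S2 pos2 m2 lev2 (z - a) * 1) (at z)"
    by (rule DERIV_chain2[where g="\<lambda>z. z - a", OF chi_deriv[OF assms(2,4)]]) (auto intro!: derivative_eq_intros)
  show ?thesis
    using DERIV_diff[OF DERIV_add[OF chi_deriv[OF assms(1,3)] d2] DERIV_const[of L]] by simp
qed

lemma bigo_tendsto0:
  fixes f :: "real \<Rightarrow> complex"
  assumes "f \<in> O[at (0::real)](\<lambda>g. complex_of_real g)"
  shows "(f \<longlongrightarrow> 0) (at 0)"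
proof -
  obtain c where c: "c > 0" "eventually (\<lambda>x. norm (f x) \<le> c * norm (complex_of_real x)) (at 0)"
    using landau_o.bigE[OF assms] by blast
  have "((\<lambda>g. c * norm (complex_of_real g)) \<longlongrightarrow> c * norm (complex_of_real 0)) (at (0::real))"
    by (intro tendsto_intros)
  then have "((\<lambda>g. c * norm (complex_of_real g)) \<longlongrightarrow> 0) (at (0::real))" by simp
  then show ?thesis using Lim_null_comparison[OF c(2)] by blast
qed


lemma main_gen:
  fixes linf :: real and s W :: "real \<Rightarrow> complex" and \<zeta>0 :: complex
  assumes cfgA: "site_config SA cjA posA mA levA"
    and cfgB: "site_config SB cjB posB mB levB"
    and z0: "\<zeta>0 \<notin> posA ` SA" and z0r: "\<zeta>0 \<in> \<real>"
    and c0: "chid SA posA mA levA \<zeta>0 \<noteq> 0"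
    and ev: "eventually (\<lambda>g. W g \<notin> posA ` SA \<and> W g + s g \<notin> posB ` SB \<and>
               chi SA posA mA levA (W g) + chi SB posB mB levB (W g + s g) - complex_of_real linf = 0) (at 0)"
    and lim: "(W \<longlongrightarrow> \<zeta>0) (at 0)"
    and sreal: "\<And>g. s g \<in> \<real>"
    and sinf: "filterlim s at_infinity (at (0::real))"
  shows "eventually (\<lambda>g. W g \<in> \<real> \<and>
            chid SA posA mA levA (W g) + chid SB posB mB levB (W g + s g) \<in> \<real> \<and>
            sgn (Re (chid SA posA mA levA (W g) + chid SB posB mB levB (W g + s g)))
              = sgn (Re (chid SA posA mA levA \<zeta>0))) (at 0)"
proof -
  define fA where "fA = chid SA posA mA levA"
  define fB where "fB = chid SB posB mB levB"
  define hA where "hA = chi SA posA mA levA"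
  define hB where "hB = chi SB posB mB levB"
  define c where "c = fA \<zeta>0"
  have finA: "finite SA" and finB: "finite SB"
    using cfgA cfgB unfolding site_config_def by auto
  have cz0: "cnj \<zeta>0 = \<zeta>0" using z0r Reals_cnj_iff by blast
  have cr: "c \<in> \<real>" unfolding c_def fA_def
    using chid_cnj[OF cfgA, of \<zeta>0] cz0 Reals_cnj_iff by metis
  have cpos: "norm c > 0" using c0 unfolding c_def fA_def by simp
  have sc: "cnj (s g) = s g" for g using sreal Reals_cnj_iff by blast
  have contA: "isCont fA \<zeta>0" unfolding fA_def by (rule chid_cont[OF z0])
  obtain r1 where r1: "r1 > 0" "\<And>z. dist z \<zeta>0 < r1 \<Longrightarrow> dist (fA z) c < norm c / 4"
    using contA[unfolded continuous_at_eps_delta] cpos unfolding c_def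
    by (metis divide_pos_pos zero_less_numeral)
  have "open (- (posA ` SA))" using finA by (simp add: finite_imp_closed open_Compl)
  then obtain r2 where r2: "r2 > 0" "ball \<zeta>0 r2 \<subseteq> - (posA ` SA)"
    using z0 open_contains_ball by blast
  define r where "r = min r1 r2"
  have rpos: "r > 0" using r1 r2 unfolding r_def by simp
  have ball_ok: "z \<notin> posA ` SA" "norm (fA z - c) < norm c / 4" if "z \<in> ball \<zeta>0 r" for z
  proof -
    have "dist z \<zeta>0 < r1" "dist z \<zeta>0 < r2" using that unfolding r_def by (auto simp: dist_commute)
    then have a: "dist (fA z) c < norm c / 4" "z \<in> ball \<zeta>0 r2"
      using r1(2)[of z] by (auto simp: dist_commute)
    from a(2) r2(2) show "z \<notin> posA ` SA" by blast
    from a(1) show "norm (fA z - c) < norm c / 4" by (simp only: dist_norm)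
  qed
  have e1: "eventually (\<lambda>w. norm (fB w) < norm c / 4) at_infinity"
    using order_tendstoD(2)[OF tendsto_norm[OF chid_decay[of SB posB mB levB]], of "norm c / 4"] cpos
    unfolding fB_def by simp
  have e2: "eventually (\<lambda>w. w \<notin> posB ` SB) at_infinity"
    unfolding eventually_at_infinity
  proof (intro exI[of _ "(\<Sum>x\<in>posB ` SB. norm x) + 1"] allI impI)
    fix w :: complex assume a: "(\<Sum>x\<in>posB ` SB. norm x) + 1 \<le> norm w"
    show "w \<notin> posB ` SB"
    proof
      assume "w \<in> posB ` SB"
      then have "norm w \<le> (\<Sum>x\<in>posB ` SB. norm x)"
        using finB by (intro member_le_sum) auto
      then show False using a by simp
    qed
  qed
  obtain R where R: "\<And>w. R \<le> norm w \<Longrightarrow> norm (fB w) < norm c / 4 \<and> w \<notin> posB ` SB"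
    using eventually_conj[OF e1 e2] unfolding eventually_at_infinity by blast
  have evs: "eventually (\<lambda>g. norm (s g) \<ge> R + norm \<zeta>0 + r) (at 0)"
    using sinf unfolding filterlim_at_infinity_conv_norm_at_top filterlim_at_top by blast
  have evW: "eventually (\<lambda>g. dist (W g) \<zeta>0 < r) (at 0)"
    using lim rpos unfolding tendsto_iff by blast
  have l1: "((\<lambda>g. fA (W g)) \<longlongrightarrow> c) (at 0)"
    unfolding c_def by (rule isCont_tendsto_compose[OF contA lim])
  have l2: "((\<lambda>g. fB (W g + s g)) \<longlongrightarrow> 0) (at 0)"
    unfolding fB_def
    by (rule filterlim_compose[OF chid_decay tendsto_add_filterlim_at_infinity[OF lim sinf]])
  have lD: "((\<lambda>g. Re (fA (W g) + fB (W g + s g))) \<longlongrightarrow> Re c) (at 0)"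
    using tendsto_Re[OF tendsto_add[OF l1 l2]] by simp
  have cre: "c = complex_of_real (Re c)" using cr by (simp add: complex_eq_iff)
  have Rec: "Re c \<noteq> 0" using cre cpos by (metis norm_zero of_real_0 less_irrefl)
  have evsgn: "eventually (\<lambda>g. sgn (Re (fA (W g) + fB (W g + s g))) = sgn (Re c)) (at 0)"
  proof (cases "Re c > 0")
    case True
    then show ?thesis using order_tendstoD(1)[OF lD, of 0]
      by (auto elim!: eventually_mono)
  next
    case False
    then have "Re c < 0" using Rec by simp
    then show ?thesis using order_tendstoD(2)[OF lD, of 0]
      by (auto elim!: eventually_mono)
  qed
  have main: "W g \<in> \<real> \<and> fA (W g) + fB (W g + s g) \<in> \<real>"
    if H1: "W g \<notin> posA ` SA" and H2: "W g + s g \<notin> posB ` SB"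
      and H3: "hA (W g) + hB (W g + s g) - complex_of_real linf = 0"
      and H4: "norm (s g) \<ge> R + norm \<zeta>0 + r" and H5: "dist (W g) \<zeta>0 < r" for g
  proof -
    define Z where "Z = W g"
    have inb: "z \<in> ball \<zeta>0 r \<Longrightarrow> norm (fB (z + s g)) < norm c / 4 \<and> z + s g \<notin> posB ` SB" for z
    proof -
      assume "z \<in> ball \<zeta>0 r"
      then have "norm z \<le> norm \<zeta>0 + r"
        using norm_triangle_ineq2[of z \<zeta>0] by (auto simp: dist_norm norm_minus_commute)
      moreover have "norm (s g) - norm z \<le> norm (z + s g)"
        using norm_triangle_ineq2[of "s g" "- z"] by (simp add: add.commute)
      ultimately have "R \<le> norm (z + s g)" using H4 by linarith
      then show ?thesis using R by blast
    qed
    define F where "F = (\<lambda>z. hA z + hB (z + s g) - complex_of_real linf - c * z)"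
    have dF: "(F has_field_derivative (fA z + fB (z + s g) - c)) (at z within ball \<zeta>0 r)"
      if "z \<in> ball \<zeta>0 r" for z
    proof -
      have "((\<lambda>z. hA z + hB (z - (- s g)) - complex_of_real linf) has_field_derivative
           fA z + fB (z - (- s g))) (at z)"
        unfolding hA_def hB_def fA_def fB_def
        by (rule shift_deriv[OF finA finB]) (use ball_ok(1)[OF that] inb[OF that] in auto)
      then have d0: "((\<lambda>z. hA z + hB (z + s g) - complex_of_real linf) has_field_derivative
           fA z + fB (z + s g)) (at z)" by simp
      have "(F has_field_derivative (fA z + fB (z + s g) - c * 1)) (at z)"
        unfolding F_def by (rule DERIV_diff[OF d0]) (auto intro!: derivative_eq_intros)
      then show ?thesis by (simp add: has_field_derivative_at_within)
    qed
    have nF: "norm (fA z + fB (z + s g) - c) \<le> norm c / 2" if "z \<in> ball \<zeta>0 r" for z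
    proof -
      have "norm (fA z + fB (z + s g) - c) \<le> norm (fA z - c) + norm (fB (z + s g))"
        by (metis add_diff_eq diff_add_eq norm_triangle_ineq add.commute)
      then show ?thesis using ball_ok(2)[OF that] inb[OF that] by linarith
    qed
    have Zb: "Z \<in> ball \<zeta>0 r" using H5 unfolding Z_def by (simp add: dist_commute)
    have cZb: "cnj Z \<in> ball \<zeta>0 r"
    proof -
      have "dist \<zeta>0 (cnj Z) = dist \<zeta>0 Z" using cz0 by (metis complex_cnj_diff complex_mod_cnj dist_norm)
      then show ?thesis using Zb by simp
    qed
    have hZ: "hA Z + hB (Z + s g) - complex_of_real linf = 0" using H3 Z_def by simp
    have hcZ: "hA (cnj Z) + hB (cnj Z + s g) - complex_of_real linf = 0"
    proof -
      have "hA (cnj Z) + hB (cnj Z + s g) - complex_of_real linf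
           = cnj (hA Z + hB (Z + s g) - complex_of_real linf)"
        unfolding hA_def hB_def
        using chi_cnj[OF cfgA, of Z] chi_cnj[OF cfgB, of "Z + s g"] sc[of g]
        by simp
      then show ?thesis using hZ by simp
    qed
    have bnd: "norm (F Z - F (cnj Z)) \<le> norm c / 2 * norm (Z - cnj Z)"
      by (rule field_differentiable_bound[OF convex_ball dF nF Zb cZb])
    have "F Z - F (cnj Z) = - (c * (Z - cnj Z))"
      unfolding F_def using hZ hcZ by (simp add: algebra_simps)
    then have "norm c * norm (Z - cnj Z) \<le> norm c / 2 * norm (Z - cnj Z)"
      using bnd by (simp add: norm_mult)
    then have "(norm c / 2) * norm (Z - cnj Z) \<le> 0" by (simp add: algebra_simps)
    then have "norm (Z - cnj Z) \<le> 0" using cpos by (simp add: mult_le_0_iff)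
    then have "Z - cnj Z = 0" by simp
    then have Zr: "cnj Z = Z" by simp
    have "cnj (fA Z + fB (Z + s g)) = fA Z + fB (Z + s g)"
      unfolding fA_def fB_def
      using chid_cnj[OF cfgA, of Z] chid_cnj[OF cfgB, of "Z + s g"] sc[of g] Zr by simp
    then show ?thesis using Zr Reals_cnj_iff unfolding Z_def by metis
  qed
  show ?thesis
    using eventually_conj[OF ev eventually_conj[OF evs eventually_conj[OF evW evsgn]]]
    unfolding fA_def[symmetric] fB_def[symmetric] c_def[symmetric]
    by eventually_elim (use main[unfolded hA_def hB_def] in auto)
qed

theorem lemmaC4:
  fixes linf :: real
    and S1 :: "'s set" and cj1 :: "'s \<Rightarrow> 's" and pos1 :: "'s \<Rightarrow> complex"
    and m1 :: "'s \<Rightarrow> nat" and lev1 :: "'s \<Rightarrow> nat \<Rightarrow> complex"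
    and S2 :: "'t set" and cj2 :: "'t \<Rightarrow> 't" and pos2 :: "'t \<Rightarrow> complex"
    and m2 :: "'t \<Rightarrow> nat" and lev2 :: "'t \<Rightarrow> nat \<Rightarrow> complex"
    and phi1 phi2 :: "complex \<Rightarrow> complex"
    and phig :: "real \<Rightarrow> complex \<Rightarrow> complex"
  assumes linf: "linf \<noteq> 0"
    and cfg1: "site_config S1 cj1 pos1 m1 lev1"
    and cfg2: "site_config S2 cj2 pos2 m2 lev2"
    and phi1_def: "\<And>z. phi1 z = chi S1 pos1 m1 lev1 z - complex_of_real linf"
    and phi2_def: "\<And>z. phi2 z = chi S2 pos2 m2 lev2 z - complex_of_real linf"
    and phig_def: "\<And>g z. phig g z = chi S1 pos1 m1 lev1 z
                      + chi S2 pos2 m2 lev2 (z - complex_of_real (1 / g)) - complex_of_real linf"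
    and simple1: "\<And>z. z \<notin> pos1 ` S1 \<Longrightarrow> phi1 z = 0 \<Longrightarrow> deriv phi1 z \<noteq> 0"
    and simple2: "\<And>z. z \<notin> pos2 ` S2 \<Longrightarrow> phi2 z = 0 \<Longrightarrow> deriv phi2 z \<noteq> 0"
  shows
   "(\<forall>\<zeta>0 Z. \<zeta>0 \<notin> pos1 ` S1 \<and> phi1 \<zeta>0 = 0 \<and> \<zeta>0 \<in> \<real> \<and>
        (\<forall>\<^sub>F g in at (0::real). Z g \<notin> pos1 ` S1 \<and>
              Z g - complex_of_real (1 / g) \<notin> pos2 ` S2 \<and> phig g (Z g) = 0) \<and>
        (\<lambda>g. Z g - \<zeta>0) \<in> O[at (0::real)](\<lambda>g. complex_of_real g)
      \<longrightarrow> (\<forall>\<^sub>F g in at (0::real). Z g \<in> \<real> \<and> deriv (phig g) (Z g) \<in> \<real> \<and>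
              sgn (Re (deriv (phig g) (Z g))) = sgn (Re (deriv phi1 \<zeta>0))))
    \<and>
    (\<forall>\<zeta>0 Z. \<zeta>0 \<notin> pos2 ` S2 \<and> phi2 \<zeta>0 = 0 \<and> \<zeta>0 \<in> \<real> \<and>
        (\<forall>\<^sub>F g in at (0::real). Z g \<notin> pos1 ` S1 \<and>
              Z g - complex_of_real (1 / g) \<notin> pos2 ` S2 \<and> phig g (Z g) = 0) \<and>
        (\<lambda>g. Z g - complex_of_real (1 / g) - \<zeta>0) \<in> O[at (0::real)](\<lambda>g. complex_of_real g)
      \<longrightarrow> (\<forall>\<^sub>F g in at (0::real). Z g \<in> \<real> \<and> deriv (phig g) (Z g) \<in> \<real> \<and>
              sgn (Re (deriv (phig g) (Z g))) = sgn (Re (deriv phi2 \<zeta>0))))"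
proof -
  have finA: "finite S1" and finB: "finite S2"
    using cfg1 cfg2 unfolding site_config_def by auto
  have dphig: "deriv (phig g) z = chid S1 pos1 m1 lev1 z + chid S2 pos2 m2 lev2 (z - complex_of_real (1/g))"
    if "z \<notin> pos1 ` S1" "z - complex_of_real (1/g) \<notin> pos2 ` S2" for g z
  proof -
    have "phig g = (\<lambda>z. chi S1 pos1 m1 lev1 z + chi S2 pos2 m2 lev2 (z - complex_of_real (1/g)) - complex_of_real linf)"
      using phig_def by auto
    then show ?thesis
      using shift_deriv[OF finA finB that] DERIV_imp_deriv by metis
  qed
  have dphi1: "deriv phi1 z = chid S1 pos1 m1 lev1 z" if "z \<notin> pos1 ` S1" for z
  proof -
    have "phi1 = (\<lambda>z. chi S1 pos1 m1 lev1 z - complex_of_real linf)" using phi1_def by auto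
    then show ?thesis
      using DERIV_diff[OF chi_deriv[OF finA that] DERIV_const[of "complex_of_real linf"]] DERIV_imp_deriv
      by fastforce
  qed
  have dphi2: "deriv phi2 z = chid S2 pos2 m2 lev2 z" if "z \<notin> pos2 ` S2" for z
  proof -
    have "phi2 = (\<lambda>z. chi S2 pos2 m2 lev2 z - complex_of_real linf)" using phi2_def by auto
    then show ?thesis
      using DERIV_diff[OF chi_deriv[OF finB that] DERIV_const[of "complex_of_real linf"]] DERIV_imp_deriv
      by fastforce
  qed
  have inv_inf: "filterlim (\<lambda>g::real. norm (inverse g)) at_top (at 0)"
    using filterlim_inverse_at_infinity[where 'a=real] filterlim_at_infinity_conv_norm_at_top by blast
  have sinf1: "filterlim (\<lambda>g::real. complex_of_real (- (1/g))) at_infinity (at 0)"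
    unfolding filterlim_at_infinity_conv_norm_at_top using inv_inf by (simp add: divide_inverse norm_inverse)
  have sinf2: "filterlim (\<lambda>g::real. complex_of_real (1/g)) at_infinity (at 0)"
    unfolding filterlim_at_infinity_conv_norm_at_top using inv_inf by (simp add: divide_inverse norm_inverse)
  show ?thesis
  proof (intro conjI allI impI; elim conjE)
    fix \<zeta>0 Z
    assume z0: "\<zeta>0 \<notin> pos1 ` S1" and p0: "phi1 \<zeta>0 = 0" and z0r: "\<zeta>0 \<in> \<real>"
      and ev: "\<forall>\<^sub>F g in at 0. Z g \<notin> pos1 ` S1 \<and> Z g - complex_of_real (1 / g) \<notin> pos2 ` S2 \<and> phig g (Z g) = 0"
      and bo: "(\<lambda>g. Z g - \<zeta>0) \<in> O[at 0](\<lambda>g. complex_of_real g)"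
    have c0: "chid S1 pos1 m1 lev1 \<zeta>0 \<noteq> 0" using simple1[OF z0 p0] dphi1[OF z0] by simp
    have lim: "(Z \<longlongrightarrow> \<zeta>0) (at 0)" using bigo_tendsto0[OF bo] LIM_zero_iff by blast
    have ev': "eventually (\<lambda>g. Z g \<notin> pos1 ` S1 \<and> Z g + complex_of_real (- (1/g)) \<notin> pos2 ` S2 \<and>
               chi S1 pos1 m1 lev1 (Z g) + chi S2 pos2 m2 lev2 (Z g + complex_of_real (- (1/g))) - complex_of_real linf = 0) (at 0)"
      using ev by eventually_elim (simp add: phig_def)
    have G: "eventually (\<lambda>g. Z g \<in> \<real> \<and>
            chid S1 pos1 m1 lev1 (Z g) + chid S2 pos2 m2 lev2 (Z g + complex_of_real (- (1/g))) \<in> \<real> \<and>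
            sgn (Re (chid S1 pos1 m1 lev1 (Z g) + chid S2 pos2 m2 lev2 (Z g + complex_of_real (- (1/g)))))
              = sgn (Re (chid S1 pos1 m1 lev1 \<zeta>0))) (at 0)"
      by (rule main_gen[OF cfg1 cfg2 z0 z0r c0 ev' lim _ sinf1]) simp
    show "\<forall>\<^sub>F g in at 0. Z g \<in> \<real> \<and> deriv (phig g) (Z g) \<in> \<real> \<and>
              sgn (Re (deriv (phig g) (Z g))) = sgn (Re (deriv phi1 \<zeta>0))"
      using eventually_conj[OF ev G]
      by eventually_elim (simp add: dphig dphi1[OF z0])
  next
    fix \<zeta>0 Z
    assume z0: "\<zeta>0 \<notin> pos2 ` S2" and p0: "phi2 \<zeta>0 = 0" and z0r: "\<zeta>0 \<in> \<real>"
      and ev: "\<forall>\<^sub>F g in at 0. Z g \<notin> pos1 ` S1 \<and> Z g - complex_of_real (1 / g) \<notin> pos2 ` S2 \<and> phig g (Z g) = 0"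
      and bo: "(\<lambda>g. Z g - complex_of_real (1 / g) - \<zeta>0) \<in> O[at 0](\<lambda>g. complex_of_real g)"
    have c0: "chid S2 pos2 m2 lev2 \<zeta>0 \<noteq> 0" using simple2[OF z0 p0] dphi2[OF z0] by simp
    have lim: "((\<lambda>g. Z g - complex_of_real (1 / g)) \<longlongrightarrow> \<zeta>0) (at 0)"
      using bigo_tendsto0[OF bo] LIM_zero_iff by blast
    have ev': "eventually (\<lambda>g. Z g - complex_of_real (1 / g) \<notin> pos2 ` S2 \<and>
               Z g - complex_of_real (1 / g) + complex_of_real (1/g) \<notin> pos1 ` S1 \<and>
               chi S2 pos2 m2 lev2 (Z g - complex_of_real (1 / g)) +
               chi S1 pos1 m1 lev1 (Z g - complex_of_real (1 / g) + complex_of_real (1/g)) - complex_of_real linf = 0) (at 0)"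
      using ev by eventually_elim (simp add: phig_def add.commute)
    have G: "eventually (\<lambda>g. Z g - complex_of_real (1 / g) \<in> \<real> \<and>
            chid S2 pos2 m2 lev2 (Z g - complex_of_real (1 / g)) + chid S1 pos1 m1 lev1 (Z g - complex_of_real (1 / g) + complex_of_real (1/g)) \<in> \<real> \<and>
            sgn (Re (chid S2 pos2 m2 lev2 (Z g - complex_of_real (1 / g)) + chid S1 pos1 m1 lev1 (Z g - complex_of_real (1 / g) + complex_of_real (1/g))))
              = sgn (Re (chid S2 pos2 m2 lev2 \<zeta>0))) (at 0)"
      by (rule main_gen[OF cfg2 cfg1 z0 z0r c0 ev' lim _ sinf2]) simp
    show "\<forall>\<^sub>F g in at 0. Z g \<in> \<real> \<and> deriv (phig g) (Z g) \<in> \<real> \<and>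
              sgn (Re (deriv (phig g) (Z g))) = sgn (Re (deriv phi2 \<zeta>0))"
      using eventually_conj[OF ev G]
    proof eventually_elim
      case (elim g)
      have r1: "complex_of_real (1 / g) \<in> \<real>" by simp
      have "Z g = (Z g - complex_of_real (1 / g)) + complex_of_real (1 / g)" by simp
      then have "Z g \<in> \<real>" using elim r1 Reals_add by metis
      then show ?case using elim by (simp add: dphig dphi2[OF z0] add.commute)
    qed
  qed
qed

end
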